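(* Let $T=T_{\lambda\Delta}$ be a non-degenerate T-graph. Embed $\mathcal H$ in the plane as follows: each white vertex $w$ is placed at the centre of mass of the triangle $\psi(w)$; each black vertex $b$ is placed at the unique vertex of $T$ lying in the interior of the segment $\psi(b)$; a white vertex $w$ and a black vertex $b$ are joined by a straight edge if and only if the segment $\psi(b)$ shares more than one point with the triangle $\psi(w)$. Then this is a proper embedding of $\mathcal H$ (the edges so drawn are exactly the edges of $\mathcal H$ and no two of them cross).
   Context: Setup. $\mathcal H$ is the hexagonal lattice with black/white bipartition, $\mathcal H^\dagger$ its dual triangular lattice, whose faces are coloured black or white according to the vertex of $\mathcal H$ they contain. A T-graph $T=T_{\lambda\Delta}=\psi(\mathcal H^\dagger)\subset\mathbb C$ is the image of $\mathcal H^\dagger$ under a map $\psi=\psi_{\lambda\Delta}$ defined on vertices of $\mathcal H^\dagger$ as the primitive of an explicit gradient flow (depending on a triangle $\Delta$ with angles $\pi p_a,\pi p_b,\pi p_c$, $p_a+p_b+p_c=1$, $p_\bullet\in(0,1)$, and a unit complex number $\lambda$) and extended affinely on edges. The following properties hold: the image of each black face of $\mathcal H^\dagger$ is a segment; the image of each white face is a triangle similar to $\Delta$ with orientation preserved; these triangles cover the plane with disjoint interiors; if two segments intersect, the intersection point is an endpoint of at least one of them. $T$ is called non-degenerate if no white triangle is degenerate to a point and every point $\psi(v)$, $v$ a vertex of $\mathcal H^\dagger$, belongs to exactly three segments, being an endpoint of two of them and in the interior of the third (this holds for Lebesgue-a.e. $\lambda$). The points $\psi(v)$ are the vertices of $T$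 (all segment endpoints are of this form), edges of $T$ are the portions of segments between consecutive vertices, faces of $T$ are the white triangles. One writes $\psi(b)$ for the segment image of the black face containing the black vertex $b$ of $\mathcal H$, and $\psi(w)$ for the triangle image of the white face containing white $w$. Each segment $\psi(b)$ contains exactly one vertex of $T$ in its interior. *)

theory Defs
  imports "HOL-Analysis.Analysis"
begin

text \<open>Vertices of the triangular lattice (dual of the hexagonal lattice)
  are indexed by int \<times> int.  The white vertex w = (i,j) of the hexagonal lattice
  corresponds to the up-triangle with vertices (i,j), (i+1,j), (i,j+1); the black
  vertex b = (i,j) corresponds to the down-triangle with vertices (i+1,j), (i,j+1),
  (i+1,j+1).  Two faces are adjacent iff they share an edge of the triangular lattice.\<close>

type_synonym tvert = "int \<times> int"

definition white_face :: "int \<times> int \<Rightarrow> tvert set" where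
  "white_face w = {(fst w, snd w), (fst w + 1, snd w), (fst w, snd w + 1)}"

definition black_face :: "int \<times> int \<Rightarrow> tvert set" where
  "black_face b = {(fst b + 1, snd b), (fst b, snd b + 1), (fst b + 1, snd b + 1)}"

definition hex_adj :: "int \<times> int \<Rightarrow> int \<times> int \<Rightarrow> bool" where
  "hex_adj w b \<longleftrightarrow> b = w \<or> b = (fst w - 1, snd w) \<or> b = (fst w, snd w - 1)"

text \<open>Images of faces under psi (extended affinely): convex hulls of the images of the corners.\<close>
definition psi_tri :: "(tvert \<Rightarrow> complex) \<Rightarrow> int \<times> int \<Rightarrow> complex set" where
  "psi_tri \<psi> w = convex hull (\<psi> ` white_face w)"

definition psi_seg :: "(tvert \<Rightarrow> complex) \<Rightarrow> int \<times> int \<Rightarrow> complex set" where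
  "psi_seg \<psi> b = convex hull (\<psi> ` black_face b)"

text \<open>The reference triangle Delta with angles pi*pa, pi*pb, pi*pc at the vertices
  0, 1, and the third (positively oriented) vertex.\<close>
definition delta_apex :: "real \<Rightarrow> real \<Rightarrow> real \<Rightarrow> complex" where
  "delta_apex pa pb pc = complex_of_real (sin (pi * pb) / sin (pi * pc)) * cis (pi * pa)"

definition is_T_graph_map :: "real \<Rightarrow> real \<Rightarrow> real \<Rightarrow> (tvert \<Rightarrow> complex) \<Rightarrow> bool" where
  "is_T_graph_map pa pb pc \<psi> \<longleftrightarrow>
     \<comment> \<open>image of each black face is a segment\<close>
     (\<forall>b. collinear (\<psi> ` black_face b)) \<and>
     \<comment> \<open>image of each white face is a triangle similar to Delta, orientation preserved\<close>
     (\<forall>w. \<exists>a c. \<psi> (fst w, snd w) = c \<and> \<psi> (fst w + 1, snd w) = a + c \<and>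
                 \<psi> (fst w, snd w + 1) = a * delta_apex pa pb pc + c) \<and>
     \<comment> \<open>the triangles cover the plane with disjoint interiors\<close>
     (\<Union>w. psi_tri \<psi> w) = UNIV \<and>
     (\<forall>w w'. w \<noteq> w' \<longrightarrow> interior (psi_tri \<psi> w) \<inter> interior (psi_tri \<psi> w') = {}) \<and>
     \<comment> \<open>intersection points of two segments are endpoints of at least one of them\<close>
     (\<forall>b b' p. b \<noteq> b' \<longrightarrow> p \<in> psi_seg \<psi> b \<inter> psi_seg \<psi> b' \<longrightarrow>
          p extreme_point_of psi_seg \<psi> b \<or> p extreme_point_of psi_seg \<psi> b')"

definition T_nondegenerate :: "(tvert \<Rightarrow> complex) \<Rightarrow> bool" where
  "T_nondegenerate \<psi> \<longleftrightarrow>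
     (\<forall>w. \<not> (\<exists>z. psi_tri \<psi> w = {z})) \<and>
     (\<forall>v. card {b. \<psi> v \<in> psi_seg \<psi> b} = 3 \<and>
          card {b. \<psi> v extreme_point_of psi_seg \<psi> b} = 2 \<and>
          card {b. \<psi> v \<in> rel_interior (psi_seg \<psi> b)} = 1)"

definition white_pos :: "(tvert \<Rightarrow> complex) \<Rightarrow> int \<times> int \<Rightarrow> complex" where
  "white_pos \<psi> w = (\<psi> (fst w, snd w) + \<psi> (fst w + 1, snd w) + \<psi> (fst w, snd w + 1)) / 3"

definition black_pos :: "(tvert \<Rightarrow> complex) \<Rightarrow> int \<times> int \<Rightarrow> complex" where
  "black_pos \<psi> b = (THE x. x \<in> range \<psi> \<and> x \<in> rel_interior (psi_seg \<psi> b))"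

definition hex_pos :: "(tvert \<Rightarrow> complex) \<Rightarrow> (int \<times> int) + (int \<times> int) \<Rightarrow> complex" where
  "hex_pos \<psi> u = (case u of Inl w \<Rightarrow> white_pos \<psi> w | Inr b \<Rightarrow> black_pos \<psi> b)"

definition drawn_edge :: "(tvert \<Rightarrow> complex) \<Rightarrow> int \<times> int \<Rightarrow> int \<times> int \<Rightarrow> bool" where
  "drawn_edge \<psi> w b \<longleftrightarrow>
     (\<exists>x y. x \<noteq> y \<and> x \<in> psi_seg \<psi> b \<inter> psi_tri \<psi> w \<and> y \<in> psi_seg \<psi> b \<inter> psi_tri \<psi> w)"

end

theory Submission imports Defs begin

lemma seg_aux:
  fixes c m1 m2 p :: "'a::euclidean_space"
  assumes S: "convex S" "c \<in> interior S" "m1 \<in> S" "m1 \<notin> interior S" "m2 \<notin> interior S" "m1 \<noteq> m2"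
    and p: "p = (1 - s) *\<^sub>R c + s *\<^sub>R m1" "p = (1 - t) *\<^sub>R c + t *\<^sub>R m2"
    and st: "0 < s" "s \<le> t" "t \<le> 1"
  shows False
proof -
  have eq: "s *\<^sub>R (m1 - c) = t *\<^sub>R (m2 - c)" using p by (simp add: algebra_simps)
  have t0: "t > 0" using st by simp
  have m2: "m2 = (1 - s/t) *\<^sub>R c + (s/t) *\<^sub>R m1"
  proof -
    have "m2 - c = (1/t) *\<^sub>R (t *\<^sub>R (m2 - c))" using t0 by simp
    also have "\<dots> = (1/t) *\<^sub>R (s *\<^sub>R (m1 - c))" using eq by simp
    also have "\<dots> = (s/t) *\<^sub>R (m1 - c)" by simp
    finally show ?thesis by (simp add: algebra_simps)
  qed
  show False
  proof (cases "s = t")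
    case True
    then show ?thesis using m2 t0 S(6) by simp
  next
    case False
    then have u: "0 < s/t" "s/t < 1" using st by auto
    have cm: "c \<noteq> m1" using S by blast
    have "m2 \<in> open_segment c m1" unfolding in_segment(2) using u cm m2 by blast
    moreover have "open_segment c m1 \<subseteq> interior S"
      using in_interior_closure_convex_segment[OF S(1,2)] S(3) closure_subset by blast
    ultimately show False using S(5) by blast
  qed
qed

lemma two_seg:
  fixes c m1 m2 p :: "'a::euclidean_space"
  assumes S: "convex S" "c \<in> interior S" "m1 \<in> S" "m2 \<in> S" "m1 \<notin> interior S" "m2 \<notin> interior S" "m1 \<noteq> m2"
    and p: "p \<in> closed_segment c m1" "p \<in> closed_segment c m2"
  shows "p = c"
proof -
  obtain s where s: "0 \<le> s" "s \<le> 1" "p = (1 - s) *\<^sub>R c + s *\<^sub>R m1" using p(1) unfolding in_segment(1) by blast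
  obtain t where t: "0 \<le> t" "t \<le> 1" "p = (1 - t) *\<^sub>R c + t *\<^sub>R m2" using p(2) unfolding in_segment(1) by blast
  show ?thesis
  proof (rule ccontr)
    assume pc: "p \<noteq> c"
    then have "s \<noteq> 0" "t \<noteq> 0" using s t by auto
    then have "0 < s" "0 < t" using s t by auto
    show False
    proof (cases "s \<le> t")
      case True
      show False by (rule seg_aux[OF S(1,2,3,5,6,7) s(3) t(3) \<open>0 < s\<close> True t(2)])
    next
      case False
      show False by (rule seg_aux[OF S(1,2,4,6,5) S(7)[symmetric] t(3) s(3) \<open>0 < t\<close> _ s(2)]) (use False in auto)
    qed
  qed
qed

locale tg =
  fixes pa pb pc :: real and \<psi> :: "int \<times> int \<Rightarrow> complex"
  assumes p: "0 < pa" "pa < 1" "0 < pb" "pb < 1" "0 < pc" "pc < 1"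
    and T: "is_T_graph_map pa pb pc \<psi>"
    and N: "T_nondegenerate \<psi>"
    and U: "\<forall>b. \<exists>!x. x \<in> range \<psi> \<and> x \<in> rel_interior (psi_seg \<psi> b)"
begin

lemma apex_im: "Im (delta_apex pa pb pc) > 0"
proof -
  have "sin (pi*pa) > 0" "sin (pi*pb) > 0" "sin (pi*pc) > 0"
    using p by (auto intro!: sin_gt_zero)
  then show ?thesis by (simp add: delta_apex_def)
qed

lemma tri_eq: "psi_tri \<psi> w = convex hull {\<psi> (fst w, snd w), \<psi> (fst w + 1, snd w), \<psi> (fst w, snd w + 1)}"
  by (simp add: psi_tri_def white_face_def)

lemma seg_eq: "psi_seg \<psi> b = convex hull {\<psi> (fst b + 1, snd b), \<psi> (fst b, snd b + 1), \<psi> (fst b + 1, snd b + 1)}"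
  by (simp add: psi_seg_def black_face_def)

lemma T1: "\<forall>b. collinear (\<psi> ` black_face b)"
  using T unfolding is_T_graph_map_def by (elim conjE) assumption
lemma T2: "\<forall>w. \<exists>a c. \<psi> (fst w, snd w) = c \<and> \<psi> (fst w + 1, snd w) = a + c \<and>
                 \<psi> (fst w, snd w + 1) = a * delta_apex pa pb pc + c"
  using T unfolding is_T_graph_map_def by (elim conjE) assumption
lemma T4: "\<forall>w w'. w \<noteq> w' \<longrightarrow> interior (psi_tri \<psi> w) \<inter> interior (psi_tri \<psi> w') = {}"
  using T unfolding is_T_graph_map_def by (elim conjE) assumption
lemma T5: "\<forall>b b' p. b \<noteq> b' \<longrightarrow> p \<in> psi_seg \<psi> b \<inter> psi_seg \<psi> b' \<longrightarrow>
          p extreme_point_of psi_seg \<psi> b \<or> p extreme_point_of psi_seg \<psi> b'"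
  using T unfolding is_T_graph_map_def by (elim conjE) assumption
lemma N1: "\<forall>w. \<not> (\<exists>z. psi_tri \<psi> w = {z})"
  using N unfolding T_nondegenerate_def by (elim conjE) assumption
lemma N2: "\<forall>v. card {b. \<psi> v \<in> psi_seg \<psi> b} = 3 \<and>
          card {b. \<psi> v extreme_point_of psi_seg \<psi> b} = 2 \<and>
          card {b. \<psi> v \<in> rel_interior (psi_seg \<psi> b)} = 1"
  using N unfolding T_nondegenerate_def by (elim conjE) assumption

lemma noncol: "\<not> collinear {\<psi> (fst w, snd w), \<psi> (fst w + 1, snd w), \<psi> (fst w, snd w + 1)}"
proof
  assume col: "collinear {\<psi> (fst w, snd w), \<psi> (fst w + 1, snd w), \<psi> (fst w, snd w + 1)}"
  obtain a c where ac: "\<psi> (fst w, snd w) = c" "\<psi> (fst w + 1, snd w) = a + c"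
    "\<psi> (fst w, snd w + 1) = a * delta_apex pa pb pc + c"
    using T2 by blast
  have a0: "a \<noteq> 0"
  proof
    assume "a = 0"
    then have "psi_tri \<psi> w = {c}" using ac by (simp add: tri_eq)
    then show False using N1 by blast
  qed
  have e: "{\<psi> (fst w, snd w), \<psi> (fst w + 1, snd w), \<psi> (fst w, snd w + 1)} = {a + c, c, a * delta_apex pa pb pc + c}"
    using ac by auto
  have "collinear {a + c, c, a * delta_apex pa pb pc + c}" using col unfolding e .
  then have "collinear {0, a + c - c, a * delta_apex pa pb pc + c - c}"
    using collinear_3[of "a + c" c "a * delta_apex pa pb pc + c"] by simp
  then have "collinear {0, a, a * delta_apex pa pb pc}" by simp
  then obtain r where r: "a * delta_apex pa pb pc = r *\<^sub>R a"
    using a0 apex_im unfolding collinear_lemma by auto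
  then have "a * delta_apex pa pb pc = a * of_real r"
    by (simp add: scaleR_conv_of_real mult.commute)
  then have "delta_apex pa pb pc = of_real r" using a0 by simp
  then show False using apex_im by simp
qed


abbreviation "cA w \<equiv> \<psi> (fst w, snd w)"
abbreviation "cB w \<equiv> \<psi> (fst w + 1, snd w)"
abbreviation "cC w \<equiv> \<psi> (fst w, snd w + 1)"

lemma int_tri: "interior (psi_tri \<psi> w) = {v. \<exists>x y z. 0 < x \<and> 0 < y \<and> 0 < z \<and> x + y + z = 1 \<and>
   x *\<^sub>R cA w + y *\<^sub>R cB w + z *\<^sub>R cC w = v}"
  unfolding tri_eq by (rule interior_convex_hull_3_minimal[OF noncol]) simp

lemma cent: "white_pos \<psi> w \<in> interior (psi_tri \<psi> w)"
proof -
  have "(1/3) *\<^sub>R cA w + (1/3) *\<^sub>R cB w + (1/3) *\<^sub>R cC w = white_pos \<psi> w"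
    by (simp add: white_pos_def scaleR_conv_of_real add_divide_distrib)
  then show ?thesis unfolding int_tri by (intro CollectI exI[of _ "1/3"]) auto
qed

lemma tri_convex: "convex (psi_tri \<psi> w)" unfolding psi_tri_def by (rule convex_convex_hull)
lemma tri_closed: "closed (psi_tri \<psi> w)" unfolding psi_tri_def
  by (rule compact_imp_closed, rule finite_imp_compact_convex_hull) (simp add: white_face_def)

lemma clos: "closure (interior (psi_tri \<psi> w)) = psi_tri \<psi> w"
proof -
  have "closure (interior (psi_tri \<psi> w)) = closure (psi_tri \<psi> w)"
    by (rule convex_closure_interior[OF tri_convex]) (use cent in blast)
  also have "\<dots> = psi_tri \<psi> w" by (rule closure_closed[OF tri_closed])
  finally show ?thesis .
qed

lemma L5:
  assumes "p \<in> interior (psi_tri \<psi> w)" "p \<in> psi_tri \<psi> w'"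
  shows "w = w'"
proof (rule ccontr)
  assume ne: "w \<noteq> w'"
  have "interior (psi_tri \<psi> w) \<inter> psi_tri \<psi> w' \<noteq> {}" using assms by blast
  then have "interior (psi_tri \<psi> w) \<inter> closure (interior (psi_tri \<psi> w')) \<noteq> {}"
    by (simp add: clos)
  then have "interior (psi_tri \<psi> w) \<inter> interior (psi_tri \<psi> w') \<noteq> {}"
    using open_Int_closure_eq_empty[of "interior (psi_tri \<psi> w)"] by auto
  then show False using T4 ne by blast
qed

lemma corner_in: "\<psi> v \<in> psi_tri \<psi> v"
  unfolding tri_eq by (rule hull_inc) (cases v, simp)

lemma corner_not: "\<psi> v \<notin> interior (psi_tri \<psi> w)"
proof
  assume a: "\<psi> v \<in> interior (psi_tri \<psi> w)"
  then have "w = v" using L5 corner_in by blast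
  then show False using a not_in_interior_convex_hull_3(1)[of "\<psi> v"]
    by (cases v) (simp add: tri_eq)
qed

lemma bdry:
  assumes "p \<in> psi_tri \<psi> w" "p \<notin> interior (psi_tri \<psi> w)"
  shows "p \<in> closed_segment (cA w) (cB w) \<union> closed_segment (cA w) (cC w) \<union> closed_segment (cB w) (cC w)"
proof -
  obtain u v t where uvt: "0 \<le> u" "0 \<le> v" "0 \<le> t" "u + v + t = 1"
     "p = u *\<^sub>R cA w + v *\<^sub>R cB w + t *\<^sub>R cC w"
    using assms(1) unfolding tri_eq convex_hull_3 by blast
  have "u = 0 \<or> v = 0 \<or> t = 0"
  proof (rule ccontr)
    assume "\<not> ?thesis"
    then have pos: "0 < u" "0 < v" "0 < t" using uvt by auto
    have "p \<in> interior (psi_tri \<psi> w)" unfolding int_tri using pos uvt(4,5) by blast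
    then show False using assms by blast
  qed
  moreover
  { assume "u = 0"
    then have "p = (1 - t) *\<^sub>R cB w + t *\<^sub>R cC w" "t \<le> 1" using uvt by auto
    then have "p \<in> closed_segment (cB w) (cC w)" using uvt unfolding closed_segment_def by blast }
  moreover
  { assume "v = 0"
    then have "p = (1 - t) *\<^sub>R cA w + t *\<^sub>R cC w" "t \<le> 1" using uvt by auto
    then have "p \<in> closed_segment (cA w) (cC w)" using uvt unfolding closed_segment_def by blast }
  moreover
  { assume "t = 0"
    then have "p = (1 - v) *\<^sub>R cA w + v *\<^sub>R cB w" "v \<le> 1" using uvt by auto
    then have "p \<in> closed_segment (cA w) (cB w)" using uvt unfolding closed_segment_def by blast }
  ultimately show ?thesis by blast
qed


abbreviation "bA b \<equiv> \<psi> (fst b + 1, snd b)"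
abbreviation "bB b \<equiv> \<psi> (fst b, snd b + 1)"
abbreviation "bC b \<equiv> \<psi> (fst b + 1, snd b + 1)"

lemma wdist: "cA w \<noteq> cB w" "cA w \<noteq> cC w" "cB w \<noteq> cC w"
  using noncol[of w] by (auto simp: insert_commute)

lemma bdist: "bA b \<noteq> bB b" "bB b \<noteq> bC b" "bA b \<noteq> bC b"
  using wdist(3)[of b] wdist(1)[of "(fst b, snd b + 1)"] wdist(2)[of "(fst b + 1, snd b)"]
  by auto

lemma seg_convex: "convex (psi_seg \<psi> b)" unfolding psi_seg_def by (rule convex_convex_hull)

lemma bcol: "collinear {bA b, bB b, bC b}"
  using T1 by (simp add: black_face_def)

lemma hull3_seg:
  assumes "y \<in> closed_segment x z"
  shows "convex hull {x, y, z} = closed_segment x z"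
proof -
  have "y \<in> convex hull {x, z}" using assms by (simp add: segment_convex_hull)
  then have "convex hull (insert y {x, z}) = convex hull {x, z}" by (rule hull_redundant)
  then show ?thesis by (simp add: segment_convex_hull insert_commute)
qed

lemma blk:
  obtains x y z where "{x, y, z} = {bA b, bB b, bC b}" "y \<in> open_segment x z"
    "psi_seg \<psi> b = closed_segment x z" "black_pos \<psi> b = y" "y \<in> range \<psi>"
proof -
  have "\<exists>x y z. {x, y, z} = {bA b, bB b, bC b} \<and> y \<in> open_segment x z \<and> y \<in> range \<psi>"
  proof -
    have "between (bB b, bC b) (bA b) \<or> between (bC b, bA b) (bB b) \<or> between (bA b, bB b) (bC b)"
      using bcol[of b] collinear_between_cases by blast
    then show ?thesis
    proof (elim disjE)
      assume "between (bB b, bC b) (bA b)"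
      then have "bA b \<in> open_segment (bB b) (bC b)" using bdist[of b]
        by (auto simp: between_mem_segment open_segment_def)
      then show ?thesis by (intro exI[of _ "bB b"] exI[of _ "bA b"] exI[of _ "bC b"]) auto
    next
      assume "between (bC b, bA b) (bB b)"
      then have "bB b \<in> open_segment (bC b) (bA b)" using bdist[of b]
        by (auto simp: between_mem_segment open_segment_def)
      then show ?thesis by (intro exI[of _ "bC b"] exI[of _ "bB b"] exI[of _ "bA b"]) auto
    next
      assume "between (bA b, bB b) (bC b)"
      then have "bC b \<in> open_segment (bA b) (bB b)" using bdist[of b]
        by (auto simp: between_mem_segment open_segment_def)
      then show ?thesis by (intro exI[of _ "bA b"] exI[of _ "bC b"] exI[of _ "bB b"]) auto
    qed
  qed
  then obtain x y z where xyz: "{x, y, z} = {bA b, bB b, bC b}" "y \<in> open_segment x z" "y \<in> range \<psi>"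
    by blast
  have cs: "psi_seg \<psi> b = closed_segment x z"
  proof -
    have "psi_seg \<psi> b = convex hull {x, y, z}" using xyz(1) by (simp add: seg_eq)
    also have "\<dots> = closed_segment x z" using xyz(2) by (intro hull3_seg) (auto simp: open_segment_def)
    finally show ?thesis .
  qed
  have xz: "x \<noteq> z" using xyz(2) by (auto simp: open_segment_def)
  have ri: "y \<in> rel_interior (psi_seg \<psi> b)" using cs xyz(2) xz by (simp add: rel_interior_closed_segment)
  have "black_pos \<psi> b = y" unfolding black_pos_def
    using ri xyz(3) by (intro the1_equality[OF U[rule_format, of b]]) auto
  then show ?thesis using that xyz cs by blast
qed

lemma black_pos_corner: "black_pos \<psi> b \<in> range \<psi>"
  by (rule blk[of b]) auto

lemma black_pos_notint: "black_pos \<psi> b \<notin> interior (psi_tri \<psi> w)"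
proof -
  obtain v where "black_pos \<psi> b = \<psi> v" using black_pos_corner[of b] by auto
  then show ?thesis using corner_not[of v w] by simp
qed

lemma corners_in_tri: "cA w \<in> psi_tri \<psi> w" "cB w \<in> psi_tri \<psi> w" "cC w \<in> psi_tri \<psi> w"
  unfolding tri_eq by (auto intro: hull_inc)

lemma corners_in_seg: "bA b \<in> psi_seg \<psi> b" "bB b \<in> psi_seg \<psi> b" "bC b \<in> psi_seg \<psi> b"
  unfolding seg_eq by (auto intro: hull_inc)

lemma adj_cases: "hex_adj w b \<longleftrightarrow> w = b \<or> w = (fst b, snd b + 1) \<or> w = (fst b + 1, snd b)"
  by (cases w; cases b) (auto simp: hex_adj_def)

lemma bpair:
  assumes "p \<in> {bA b, bB b, bC b}" "q \<in> {bA b, bB b, bC b}"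
  shows "\<exists>w. hex_adj w b \<and> p \<in> psi_tri \<psi> w \<and> q \<in> psi_tri \<psi> w"
proof -
  have 1: "bA b \<in> psi_tri \<psi> b" "bB b \<in> psi_tri \<psi> b"
    using corners_in_tri(2,3)[of b] by auto
  have 2: "bB b \<in> psi_tri \<psi> (fst b, snd b + 1)" "bC b \<in> psi_tri \<psi> (fst b, snd b + 1)"
    using corners_in_tri(1,2)[of "(fst b, snd b + 1)"] by auto
  have 3: "bA b \<in> psi_tri \<psi> (fst b + 1, snd b)" "bC b \<in> psi_tri \<psi> (fst b + 1, snd b)"
    using corners_in_tri(1,3)[of "(fst b + 1, snd b)"] by auto
  have a: "hex_adj b b" "hex_adj (fst b, snd b + 1) b" "hex_adj (fst b + 1, snd b) b"
    by (auto simp: adj_cases)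
  show ?thesis using assms 1 2 3 a by blast
qed

lemma seg_cover: "psi_seg \<psi> b \<subseteq> (\<Union>w\<in>{w. hex_adj w b}. psi_tri \<psi> w)"
proof -
  obtain x y z where xyz: "{x, y, z} = {bA b, bB b, bC b}" "psi_seg \<psi> b = closed_segment x z"
    by (rule blk[of b]) auto
  obtain w where "hex_adj w b" "x \<in> psi_tri \<psi> w" "z \<in> psi_tri \<psi> w"
    using bpair[of x b z] xyz(1) by blast
  then have "closed_segment x z \<subseteq> psi_tri \<psi> w" by (intro closed_segment_subset tri_convex)
  then show ?thesis using xyz(2) \<open>hex_adj w b\<close> by blast
qed

lemma black_in_tri:
  assumes "hex_adj w b"
  shows "black_pos \<psi> b \<in> psi_tri \<psi> w"
proof -
  obtain x y z where xyz: "{x, y, z} = {bA b, bB b, bC b}" "y \<in> open_segment x z" "black_pos \<psi> b = y"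
    by (rule blk[of b]) auto
  have 1: "bA b \<in> psi_tri \<psi> b" "bB b \<in> psi_tri \<psi> b"
    using corners_in_tri(2,3)[of b] by auto
  have 2: "bB b \<in> psi_tri \<psi> (fst b, snd b + 1)" "bC b \<in> psi_tri \<psi> (fst b, snd b + 1)"
    using corners_in_tri(1,2)[of "(fst b, snd b + 1)"] by auto
  have 3: "bA b \<in> psi_tri \<psi> (fst b + 1, snd b)" "bC b \<in> psi_tri \<psi> (fst b + 1, snd b)"
    using corners_in_tri(1,3)[of "(fst b + 1, snd b)"] by auto
  obtain p q where pq: "p \<in> psi_tri \<psi> w" "q \<in> psi_tri \<psi> w" "p \<in> {bA b, bB b, bC b}" "q \<in> {bA b, bB b, bC b}" "p \<noteq> q"
    using assms 1 2 3 bdist[of b] unfolding adj_cases by blast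
  have xz: "x \<noteq> y" "y \<noteq> z" "x \<noteq> z" using xyz(2) by (auto simp: open_segment_def)
  show ?thesis
  proof (cases "y = p \<or> y = q")
    case True then show ?thesis using pq xyz(3) by auto
  next
    case False
    then have "p \<in> {x, z}" "q \<in> {x, z}" using pq(3,4) xyz(1) by blast+
    then have "x \<in> psi_tri \<psi> w \<and> z \<in> psi_tri \<psi> w" using pq(1,2,5) by auto
    then have "closed_segment x z \<subseteq> psi_tri \<psi> w"
      by (intro closed_segment_subset tri_convex) auto
    then show ?thesis using xyz(2,3) by (auto simp: open_segment_def)
  qed
qed


lemma side_sub: "closed_segment (cA w) (cB w) \<union> closed_segment (cA w) (cC w) \<union> closed_segment (cB w) (cC w)
   \<subseteq> psi_seg \<psi> (fst w, snd w - 1) \<union> psi_seg \<psi> (fst w - 1, snd w) \<union> psi_seg \<psi> w"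
proof -
  have "cA w \<in> psi_seg \<psi> (fst w, snd w - 1)" "cB w \<in> psi_seg \<psi> (fst w, snd w - 1)"
    using corners_in_seg(2,3)[of "(fst w, snd w - 1)"] by auto
  then have 1: "closed_segment (cA w) (cB w) \<subseteq> psi_seg \<psi> (fst w, snd w - 1)"
    by (intro closed_segment_subset seg_convex)
  have "cA w \<in> psi_seg \<psi> (fst w - 1, snd w)" "cC w \<in> psi_seg \<psi> (fst w - 1, snd w)"
    using corners_in_seg(1,3)[of "(fst w - 1, snd w)"] by auto
  then have 2: "closed_segment (cA w) (cC w) \<subseteq> psi_seg \<psi> (fst w - 1, snd w)"
    by (intro closed_segment_subset seg_convex)
  have "cB w \<in> psi_seg \<psi> w" "cC w \<in> psi_seg \<psi> w"
    using corners_in_seg(1,2)[of w] by auto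
  then have 3: "closed_segment (cB w) (cC w) \<subseteq> psi_seg \<psi> w"
    by (intro closed_segment_subset seg_convex)
  show ?thesis using 1 2 3 by blast
qed

lemma seg_finite_ext: "finite {p. p extreme_point_of psi_seg \<psi> b}"
proof -
  have "{p. p extreme_point_of psi_seg \<psi> b} \<subseteq> \<psi> ` black_face b"
    unfolding psi_seg_def using extreme_point_of_convex_hull by blast
  moreover have "finite (\<psi> ` black_face b)" by (simp add: black_face_def)
  ultimately show ?thesis by (rule finite_subset)
qed

lemma drawn_adj:
  assumes "drawn_edge \<psi> w b" shows "hex_adj w b"
proof (rule ccontr)
  assume na: "\<not> hex_adj w b"
  obtain x y where xy: "x \<noteq> y" "x \<in> psi_seg \<psi> b \<inter> psi_tri \<psi> w" "y \<in> psi_seg \<psi> b \<inter> psi_tri \<psi> w"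
    using assms unfolding drawn_edge_def by blast
  have sub: "closed_segment x y \<subseteq> psi_seg \<psi> b \<inter> psi_tri \<psi> w"
    using xy by (intro closed_segment_subset convex_Int seg_convex tri_convex) auto
  define B where "B = {(fst w, snd w - 1), (fst w - 1, snd w), w}"
  have Bne: "b' \<noteq> b" if "b' \<in> B" for b'
  proof
    assume "b' = b"
    then have "hex_adj w b" using that unfolding B_def by (auto simp: hex_adj_def)
    then show False using na by blast
  qed
  define F where "F = {p. p extreme_point_of psi_seg \<psi> b} \<union> (\<Union>b'\<in>B. {p. p extreme_point_of psi_seg \<psi> b'})"
  have finF: "finite F" unfolding F_def B_def using seg_finite_ext by auto
  have "closed_segment x y \<subseteq> F"
  proof
    fix p assume p: "p \<in> closed_segment x y"
    then have pS: "p \<in> psi_seg \<psi> b" and pT: "p \<in> psi_tri \<psi> w" using sub by auto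
    have "p \<notin> interior (psi_tri \<psi> w)"
    proof
      assume pi: "p \<in> interior (psi_tri \<psi> w)"
      obtain w' where "hex_adj w' b" "p \<in> psi_tri \<psi> w'" using seg_cover pS by blast
      then have "w = w'" using L5 pi by blast
      then show False using na \<open>hex_adj w' b\<close> by simp
    qed
    then have "p \<in> psi_seg \<psi> (fst w, snd w - 1) \<union> psi_seg \<psi> (fst w - 1, snd w) \<union> psi_seg \<psi> w"
      using bdry[OF pT] side_sub by blast
    then obtain b' where b': "b' \<in> B" "p \<in> psi_seg \<psi> b'" unfolding B_def by blast
    then have "p extreme_point_of psi_seg \<psi> b \<or> p extreme_point_of psi_seg \<psi> b'"
      using T5 Bne[OF b'(1)] pS by blast
    then show "p \<in> F" unfolding F_def using b'(1) by blast
  qed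
  then have "finite (closed_segment x y)" using finF finite_subset by blast
  then show False using xy(1) by simp
qed

lemma adj_drawn:
  assumes "hex_adj w b" shows "drawn_edge \<psi> w b"
proof -
  have "\<exists>x y. x \<noteq> y \<and> x \<in> psi_seg \<psi> b \<and> x \<in> psi_tri \<psi> w \<and> y \<in> psi_seg \<psi> b \<and> y \<in> psi_tri \<psi> w"
    using assms unfolding adj_cases
  proof (elim disjE)
    assume "w = b" then show ?thesis
      using corners_in_tri(2,3)[of b] corners_in_seg(1,2)[of b] bdist(1)[of b] by blast
  next
    assume e: "w = (fst b, snd b + 1)"
    have "bB b \<in> psi_tri \<psi> w" "bC b \<in> psi_tri \<psi> w"
      using corners_in_tri(1,2)[of w] e by auto
    then show ?thesis using corners_in_seg(2,3)[of b] bdist(2)[of b] by blast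
  next
    assume e: "w = (fst b + 1, snd b)"
    have "bA b \<in> psi_tri \<psi> w" "bC b \<in> psi_tri \<psi> w"
      using corners_in_tri(1,3)[of w] e by auto
    then show ?thesis using corners_in_seg(1,3)[of b] bdist(3)[of b] by blast
  qed
  then show ?thesis unfolding drawn_edge_def by blast
qed


lemma white_inj: "white_pos \<psi> w = white_pos \<psi> w' \<Longrightarrow> w = w'"
proof -
  assume e: "white_pos \<psi> w = white_pos \<psi> w'"
  have "white_pos \<psi> w \<in> psi_tri \<psi> w'" using e cent[of w'] interior_subset by fastforce
  then show "w = w'" by (rule L5[OF cent[of w]])
qed

lemma black_inj: assumes "black_pos \<psi> b = black_pos \<psi> b'" shows "b = b'"
proof -
  have ri: "\<And>b. black_pos \<psi> b \<in> rel_interior (psi_seg \<psi> b)"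
  proof -
    fix b
    obtain x y z where xyz: "black_pos \<psi> b = y" "y \<in> open_segment x z" "psi_seg \<psi> b = closed_segment x z"
      by (rule blk[of b]) auto
    have xz: "x \<noteq> z" using xyz(2) by (auto simp: open_segment_def)
    show "black_pos \<psi> b \<in> rel_interior (psi_seg \<psi> b)" using xyz xz by (simp add: rel_interior_closed_segment)
  qed
  obtain v where v: "black_pos \<psi> b = \<psi> v" using black_pos_corner[of b] by auto
  have v2: "\<psi> v \<in> rel_interior (psi_seg \<psi> b)" using ri[of b] v by simp
  have v': "\<psi> v \<in> rel_interior (psi_seg \<psi> b')" using ri[of b'] v assms by simp
  have "card {b. \<psi> v \<in> rel_interior (psi_seg \<psi> b)} = 1" using N2 by blast
  then obtain b0 where "{b. \<psi> v \<in> rel_interior (psi_seg \<psi> b)} = {b0}" by (rule card_1_singletonE)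
  then have "\<And>c. \<psi> v \<in> rel_interior (psi_seg \<psi> c) \<Longrightarrow> c = b0" by blast
  then show ?thesis using v2 v' by metis
qed

lemma hex_inj: "inj (hex_pos \<psi>)"
proof (rule injI)
  fix u u' assume e: "hex_pos \<psi> u = hex_pos \<psi> u'"
  show "u = u'"
  proof (cases u; cases u')
    fix w w' assume "u = Inl w" "u' = Inl w'" then show ?thesis using e white_inj by (simp add: hex_pos_def)
  next
    fix b b' assume "u = Inr b" "u' = Inr b'" then show ?thesis using e black_inj by (simp add: hex_pos_def)
  next
    fix w b assume "u = Inl w" "u' = Inr b"
    then have "white_pos \<psi> w = black_pos \<psi> b" using e by (simp add: hex_pos_def)
    then show ?thesis using cent[of w] black_pos_notint[of b w] by simp
  next
    fix b w assume "u = Inr b" "u' = Inl w"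
    then have "white_pos \<psi> w = black_pos \<psi> b" using e by (simp add: hex_pos_def)
    then show ?thesis using cent[of w] black_pos_notint[of b w] by simp
  qed
qed

lemma edge_int:
  assumes "hex_adj w b" "p \<in> closed_segment (white_pos \<psi> w) (black_pos \<psi> b)" "p \<noteq> black_pos \<psi> b"
  shows "p \<in> interior (psi_tri \<psi> w)"
proof (cases "p = white_pos \<psi> w")
  case True then show ?thesis using cent by simp
next
  case False
  then have "p \<in> open_segment (white_pos \<psi> w) (black_pos \<psi> b)" using assms by (simp add: open_segment_def)
  moreover have "open_segment (white_pos \<psi> w) (black_pos \<psi> b) \<subseteq> interior (psi_tri \<psi> w)"
    using in_interior_closure_convex_segment[OF tri_convex cent] black_in_tri[OF assms(1)] closure_subset by blast
  ultimately show ?thesis by blast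
qed

lemma edge_sub:
  assumes "hex_adj w b" shows "closed_segment (white_pos \<psi> w) (black_pos \<psi> b) \<subseteq> psi_tri \<psi> w"
  using cent[of w] interior_subset black_in_tri[OF assms] by (intro closed_segment_subset tri_convex) auto

lemma noncross:
  assumes a: "hex_adj w b" "hex_adj w' b'" "(w, b) \<noteq> (w', b')"
    and p: "p \<in> closed_segment (white_pos \<psi> w) (black_pos \<psi> b)" "p \<in> closed_segment (white_pos \<psi> w') (black_pos \<psi> b')"
  shows "p \<in> {white_pos \<psi> w, black_pos \<psi> b} \<inter> {white_pos \<psi> w', black_pos \<psi> b'}"
proof (cases "w = w'")
  case True
  then have bb: "b \<noteq> b'" using a(3) by simp
  then have "black_pos \<psi> b \<noteq> black_pos \<psi> b'" using black_inj by blast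
  then have "p = white_pos \<psi> w"
    using two_seg[OF tri_convex cent black_in_tri[OF a(1)] black_in_tri[OF a(2)[unfolded True[symmetric]]]
        black_pos_notint black_pos_notint _ p(1) p(2)[unfolded True[symmetric]]] by blast
  then show ?thesis using True by simp
next
  case False
  have 1: "p = black_pos \<psi> b"
  proof (rule ccontr)
    assume "p \<noteq> black_pos \<psi> b"
    then have "p \<in> interior (psi_tri \<psi> w)" using edge_int a(1) p(1) by blast
    moreover have "p \<in> psi_tri \<psi> w'" using edge_sub[OF a(2)] p(2) by blast
    ultimately show False using L5 False by blast
  qed
  have 2: "p = black_pos \<psi> b'"
  proof (rule ccontr)
    assume "p \<noteq> black_pos \<psi> b'"
    then have "p \<in> interior (psi_tri \<psi> w')" using edge_int a(2) p(2) by blast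
    moreover have "p \<in> psi_tri \<psi> w" using edge_sub[OF a(1)] p(1) by blast
    ultimately show False using L5 False by blast
  qed
  show ?thesis using 1 2 by simp
qed

end

theorem mainTheorem2:
  fixes pa pb pc :: real and \<psi> :: "int \<times> int \<Rightarrow> complex"
  assumes "0 < pa" "pa < 1" "0 < pb" "pb < 1" "0 < pc" "pc < 1" "pa + pb + pc = 1"
    and "is_T_graph_map pa pb pc \<psi>"
    and "T_nondegenerate \<psi>"
    and "\<forall>b. \<exists>!x. x \<in> range \<psi> \<and> x \<in> rel_interior (psi_seg \<psi> b)"
  shows "inj (hex_pos \<psi>)
    \<and> (\<forall>w b. drawn_edge \<psi> w b \<longleftrightarrow> hex_adj w b)
    \<and> (\<forall>w b w' b'. hex_adj w b \<longrightarrow> hex_adj w' b' \<longrightarrow> (w, b) \<noteq> (w', b') \<longrightarrow>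
         closed_segment (white_pos \<psi> w) (black_pos \<psi> b) \<inter>
         closed_segment (white_pos \<psi> w') (black_pos \<psi> b')
         \<subseteq> {white_pos \<psi> w, black_pos \<psi> b} \<inter> {white_pos \<psi> w', black_pos \<psi> b'})"
proof -
  interpret tg pa pb pc \<psi> using assms by (unfold_locales) auto
  have 1: "inj (hex_pos \<psi>)" by (rule hex_inj)
  have 2: "\<forall>w b. drawn_edge \<psi> w b \<longleftrightarrow> hex_adj w b" using drawn_adj adj_drawn by blast
  have 3: "\<forall>w b w' b'. hex_adj w b \<longrightarrow> hex_adj w' b' \<longrightarrow> (w, b) \<noteq> (w', b') \<longrightarrow>
         closed_segment (white_pos \<psi> w) (black_pos \<psi> b) \<inter>
         closed_segment (white_pos \<psi> w') (black_pos \<psi> b')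
         \<subseteq> {white_pos \<psi> w, black_pos \<psi> b} \<inter> {white_pos \<psi> w', black_pos \<psi> b'}"
  proof (intro allI impI subsetI)
    fix w b w' b' p
    assume "hex_adj w b" "hex_adj w' b'" "(w, b) \<noteq> (w', b')"
      "p \<in> closed_segment (white_pos \<psi> w) (black_pos \<psi> b) \<inter> closed_segment (white_pos \<psi> w') (black_pos \<psi> b')"
    then show "p \<in> {white_pos \<psi> w, black_pos \<psi> b} \<inter> {white_pos \<psi> w', black_pos \<psi> b'}"
      using noncross by blast
  qed
  show ?thesis using 1 2 3 by blast
qed

end
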